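(* Let $S_{N-2}$ denote the set $\{\pi\in S_N:\pi(1)=2,\ \pi(2)=1\}$, let $\gamma_{ij}\in S_N$ denote the transposition exchanging $i$ and $j$ (with $\gamma_{ii}$ the identity), and for $\pi\in S_{N-2}$ and $a_+,a_-,b_+,b_-\in\{1,\dots,N\}$ define $T_{a_+a_-b_+b_-}(\pi)=\gamma_{2b_+}\gamma_{2a_+}\pi\gamma_{2a_-}\gamma_{2b_-}$ (composition of maps). If $(\pi,a_+,a_-,b_+,b_-)$ is uniform on $S_{N-2}\times\{1,\dots,N\}\times\{2,\dots,N\}^3$, then $T_{a_+a_-b_+b_-}(\pi)$ is uniform on $S_N$. Moreover, \[(T_{a_+a_-b_+b_-}(\pi))(1)=a_+,\qquad(T_{a_+a_-b_+b_-}(\pi))^{-1}(1)=a_-,\] provided that $|\{1,2,a_+,a_-,b_+,b_-\}|=6$. *)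

theory Defs
  imports "HOL-Probability.Probability_Mass_Function" "HOL-Combinatorics.Permutations"
begin

definition SN :: "nat \<Rightarrow> (nat \<Rightarrow> nat) set" where
  "SN N = {p. p permutes {1..N}}"

definition SN2 :: "nat \<Rightarrow> (nat \<Rightarrow> nat) set" where
  "SN2 N = {p \<in> SN N. p 1 = 2 \<and> p 2 = 1}"

definition gam :: "nat \<Rightarrow> nat \<Rightarrow> nat \<Rightarrow> nat" where
  "gam i j = Transposition.transpose i j"

definition T :: "nat \<Rightarrow> nat \<Rightarrow> nat \<Rightarrow> nat \<Rightarrow> (nat \<Rightarrow> nat) \<Rightarrow> (nat \<Rightarrow> nat)" where
  "T ap am bp bm p = gam 2 bp \<circ> gam 2 ap \<circ> p \<circ> gam 2 am \<circ> gam 2 bm"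

end

theory Submission
  imports Defs
begin

lemma pmf_of_set_times':
  assumes "finite A" "A \<noteq> {}" "finite B" "B \<noteq> {}"
  shows "pmf_of_set (A \<times> B) = pair_pmf (pmf_of_set A) (pmf_of_set B)"
proof (rule pmf_eqI)
  fix x :: "'a \<times> 'b"
  obtain a b where x: "x = (a, b)" by fastforce
  show "pmf (pmf_of_set (A \<times> B)) x = pmf (pair_pmf (pmf_of_set A) (pmf_of_set B)) x"
    using assms by (simp add: x pmf_pair card_cartesian_product split: split_indicator)
qed

lemma gam_perm: "a \<in> {1..N} \<Longrightarrow> N \<ge> 2 \<Longrightarrow> gam 2 a permutes {1..N}"
  unfolding gam_def by (rule permutes_swap_id) auto

lemma gam_cancel_l: "gam i j \<circ> (gam i j \<circ> f) = f"
  unfolding gam_def by (rule ext) simp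

lemma gam_cancel_r: "(f \<circ> gam i j) \<circ> gam i j = f"
  unfolding gam_def by (rule ext) simp

lemma finite_SN: "finite (SN N)"
  unfolding SN_def by (rule finite_permutations) simp

lemma SN2_sub: "SN2 N \<subseteq> SN N" unfolding SN2_def by auto

theorem lemma7p1:
  fixes N :: nat
  assumes "N \<ge> 2"
  shows "map_pmf (\<lambda>(p, ap, am, bp, bm). T ap am bp bm p)
           (pmf_of_set (SN2 N \<times> {1..N} \<times> {2..N} \<times> {2..N} \<times> {2..N}))
         = pmf_of_set (SN N) \<and>
         (\<forall>p ap am bp bm. p \<in> SN2 N \<longrightarrow> ap \<in> {1..N} \<longrightarrow> am \<in> {2..N} \<longrightarrow>
           bp \<in> {2..N} \<longrightarrow> bm \<in> {2..N} \<longrightarrow> card {1, 2, ap, am, bp, bm} = 6 \<longrightarrow>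
           T ap am bp bm p 1 = ap \<and> inv (T ap am bp bm p) 1 = am)"
proof
  define D where "D = SN2 N \<times> {1..N} \<times> {2..N} \<times> {2..N} \<times> {2..(N::nat)}"
  define \<Psi> where "\<Psi> = (\<lambda>(p, ap, am, bp, bm). (T ap am bp bm p, bp, bm))"
  have fD: "finite D" unfolding D_def
    using finite_subset[OF SN2_sub finite_SN] by auto
  have inj: "inj_on \<Psi> D"
  proof (rule inj_onI)
    fix x y assume x: "x \<in> D" and y: "y \<in> D" and e: "\<Psi> x = \<Psi> y"
    obtain p ap am bp bm where xe: "x = (p, ap, am, bp, bm)" by (cases x) auto
    obtain p' ap' am' bp' bm' where ye: "y = (p', ap', am', bp', bm')" by (cases y) auto
    have bb: "bp' = bp" "bm' = bm" using e by (auto simp: xe ye \<Psi>_def)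
    have "T ap am bp bm p = T ap' am' bp bm p'" using e by (auto simp: xe ye \<Psi>_def bb)
    hence r: "gam 2 ap \<circ> p \<circ> gam 2 am = gam 2 ap' \<circ> p' \<circ> gam 2 am'"
    proof -
      assume h: "T ap am bp bm p = T ap' am' bp bm p'"
      show ?thesis
      proof
        fix y
        have "gam 2 bp (T ap am bp bm p (gam 2 bm y)) = gam 2 bp (T ap' am' bp bm p' (gam 2 bm y))"
          using h by simp
        thus "(gam 2 ap \<circ> p \<circ> gam 2 am) y = (gam 2 ap' \<circ> p' \<circ> gam 2 am') y"
          by (simp add: T_def gam_def)
      qed
    qed
    have p: "p 1 = 2" "p 2 = 1" "p' 1 = 2" "p' 2 = 1" "p' permutes {1..N}"
      using x y by (auto simp: xe ye D_def SN2_def SN_def)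
    have am: "am \<in> {2..N}" "am' \<in> {2..N}" using x y by (auto simp: xe ye D_def)
    have "(gam 2 ap \<circ> p \<circ> gam 2 am) 1 = ap" using p am by (simp add: gam_def)
    moreover have "(gam 2 ap' \<circ> p' \<circ> gam 2 am') 1 = ap'" using p am by (simp add: gam_def)
    ultimately have aa: "ap' = ap" using r by metis
    have r2: "p \<circ> gam 2 am = p' \<circ> gam 2 am'"
      using arg_cong[OF r, of "\<lambda>f. gam 2 ap \<circ> f"] by (simp add: aa comp_assoc gam_cancel_l)
    have "p' (gam 2 am' am) = 1" using fun_cong[OF r2, of am] p by (simp add: gam_def)
    hence "p' (gam 2 am' am) = p' 2" using p by simp
    hence "gam 2 am' am = 2" using permutes_inj[OF p(5)] by (auto dest: injD)
    hence mm: "am' = am" by (auto simp: gam_def transpose_eq_iff)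
    have "p = p'" using arg_cong[OF r2, of "\<lambda>f. f \<circ> gam 2 am"] by (simp add: mm gam_cancel_r)
    thus "x = y" by (simp add: xe ye aa bb mm)
  qed
  have img: "\<Psi> ` D = SN N \<times> {2..N} \<times> {2..N}"
  proof
    show "\<Psi> ` D \<subseteq> SN N \<times> {2..N} \<times> {2..N}"
    proof
      fix z assume "z \<in> \<Psi> ` D"
      then obtain p ap am bp bm where d: "(p, ap, am, bp, bm) \<in> D" and z: "z = \<Psi> (p, ap, am, bp, bm)"
        by auto
      have "p permutes {1..N}" "ap \<in> {1..N}" "am \<in> {1..N}" "bp \<in> {1..N}" "bm \<in> {1..N}"
        "bp \<in> {2..N}" "bm \<in> {2..N}"
        using d by (auto simp: D_def SN2_def SN_def)
      hence "T ap am bp bm p permutes {1..N}"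
        unfolding T_def using assms by (intro permutes_compose gam_perm) auto
      thus "z \<in> SN N \<times> {2..N} \<times> {2..N}" using z \<open>bp \<in> {2..N}\<close> \<open>bm \<in> {2..N}\<close>
        by (simp add: \<Psi>_def SN_def)
    qed
  next
    show "SN N \<times> {2..N} \<times> {2..N} \<subseteq> \<Psi> ` D"
    proof
      fix z assume "z \<in> SN N \<times> {2..N} \<times> {2..N}"
      then obtain s bp bm where z: "z = (s, bp, bm)" and s: "s permutes {1..N}"
        and b: "bp \<in> {2..N}" "bm \<in> {2..N}" by (auto simp: SN_def)
      define r where "r = gam 2 bp \<circ> s \<circ> gam 2 bm"
      have rp: "r permutes {1..N}" unfolding r_def using assms b s
        by (intro permutes_compose gam_perm) auto
      define ap where "ap = r 1"
      have ap: "ap \<in> {1..N}" unfolding ap_def using permutes_in_image[OF rp] assms by auto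
      define q where "q = gam 2 ap \<circ> r"
      have qp: "q permutes {1..N}" unfolding q_def using assms ap rp
        by (intro permutes_compose gam_perm) auto
      have q1: "q 1 = 2" unfolding q_def by (simp add: ap_def gam_def)
      define am where "am = inv q 1"
      have qam: "q am = 1" unfolding am_def by (simp add: permutes_inverses(1)[OF qp])
      have am: "am \<in> {2..N}"
      proof -
        have "am \<in> {1..N}" unfolding am_def using permutes_in_image[OF permutes_inv[OF qp]] assms
          by auto
        moreover have "am \<noteq> 1" using qam q1 by auto
        ultimately show ?thesis by auto
      qed
      define p where "p = q \<circ> gam 2 am"
      have pp: "p permutes {1..N}" unfolding p_def using assms am qp
        by (intro permutes_compose gam_perm) auto
      have p12: "p 1 = 2" "p 2 = 1" using am q1 qam by (auto simp: p_def gam_def)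
      have "T ap am bp bm p = s"
        by (rule ext) (simp add: T_def p_def q_def r_def gam_def)
      hence "\<Psi> (p, ap, am, bp, bm) = z" by (simp add: \<Psi>_def z)
      moreover have "(p, ap, am, bp, bm) \<in> D"
        using pp p12 ap am b by (simp add: D_def SN2_def SN_def)
      ultimately show "z \<in> \<Psi> ` D" by force
    qed
  qed
  have DnE: "D \<noteq> {}"
  proof -
    have "(id, N, N) \<in> SN N \<times> {2..N} \<times> {2..N}"
      using assms by (auto simp: SN_def permutes_id)
    hence "SN N \<times> {2..N} \<times> {2..N} \<noteq> {}" by blast
    thus ?thesis using img by (metis image_empty)
  qed
  have SNne: "SN N \<noteq> {}"
  proof -
    have "id \<in> SN N" by (simp add: SN_def permutes_id)
    thus ?thesis by blast
  qed
  have "map_pmf (\<lambda>(p, ap, am, bp, bm). T ap am bp bm p) (pmf_of_set D)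
        = map_pmf fst (map_pmf \<Psi> (pmf_of_set D))"
    by (simp add: pmf.map_comp o_def \<Psi>_def split_def)
  also have "\<dots> = map_pmf fst (pmf_of_set (SN N \<times> {2..N} \<times> {2..N}))"
    using map_pmf_of_set_inj[OF inj DnE fD] img by simp
  also have "\<dots> = pmf_of_set (SN N)"
    using assms by (subst pmf_of_set_times') (auto simp: finite_SN SNne map_fst_pair_pmf)
  finally show "map_pmf (\<lambda>(p, ap, am, bp, bm). T ap am bp bm p)
           (pmf_of_set (SN2 N \<times> {1..N} \<times> {2..N} \<times> {2..N} \<times> {2..N})) = pmf_of_set (SN N)"
    by (simp add: D_def)
next
  show "\<forall>p ap am bp bm. p \<in> SN2 N \<longrightarrow> ap \<in> {1..N} \<longrightarrow> am \<in> {2..N} \<longrightarrow>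
           bp \<in> {2..N} \<longrightarrow> bm \<in> {2..N} \<longrightarrow> card {1, 2, ap, am, bp, bm} = 6 \<longrightarrow>
           T ap am bp bm p 1 = ap \<and> inv (T ap am bp bm p) 1 = am"
  proof (intro allI impI)
    fix p :: "nat \<Rightarrow> nat" and ap am bp bm :: nat
    assume p: "p \<in> SN2 N" and c: "card {1, 2, ap, am, bp, bm} = 6"
      and "ap \<in> {1..N}" "am \<in> {2..N}" "bp \<in> {2..N}" "bm \<in> {2..N}"
    have dist: "distinct [1, 2, ap, am, bp, bm]"
      by (rule card_distinct) (use c in \<open>simp only: list.set length_Cons list.size\<close>)
    have p12: "p 1 = 2" "p 2 = 1" "p permutes {1..N}" using p by (auto simp: SN2_def SN_def)
    have bij: "bij (T ap am bp bm p)" unfolding T_def gam_def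
      using permutes_bij[OF p12(3)] by (intro bij_comp) auto
    have d: "ap \<noteq> 1" "ap \<noteq> 2" "am \<noteq> 1" "am \<noteq> 2" "bm \<noteq> 1" "bm \<noteq> 2" "bp \<noteq> 1" "bp \<noteq> 2"
      "bp \<noteq> ap" "bm \<noteq> am" "am \<noteq> bm"
      using dist by auto
    have t1: "T ap am bp bm p 1 = ap" using d p12 by (simp add: T_def gam_def)
    have "T ap am bp bm p am = 1" using d p12 by (simp add: T_def gam_def)
    hence "inv (T ap am bp bm p) 1 = am" by (rule inv_f_eq[OF bij_is_inj[OF bij]])
    thus "T ap am bp bm p 1 = ap \<and> inv (T ap am bp bm p) 1 = am" using t1 by simp
  qed
qed

end
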